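(* Let $G$ be a simple graph, $\mathcal P$ a path-circular collection of $G$, and $p=u_1,u_2,\ldots,u_k$ a path in $\mathcal P$. Write $V(G)=\{u_1,\ldots,u_k,v_{k+1},\ldots,v_r\}$ and $\mathcal A=(N(u_1),\ldots,N(u_k),N(v_{k+1}),\ldots,N(v_r))$, a presentation of $M(\mathcal P)$. Then the path $p$, viewed as a graph with vertices $u_1,\ldots,u_k$ and edges $\{u_i,u_{i+1}\}$, is a minimal $(p,\mathcal A)$-presenting graph, with presenting map $u_i\mapsto i$.
   Context: A path of $G$ is the ordered list of its distinct vertices, consecutive ones adjacent. A path-circular collection $\mathcal P$ of $G$ is a collection of (not necessarily distinct) paths of $G$ such that whenever $w_1,\ldots,w_m$ are the vertices in order of a path in $\mathcal P$ and $i\in\{2,\ldots,m-1\}$: (i) $w_i$ has degree $2$ in $G$, and (ii) every path of $\mathcal P$ containing $w_i$ also contains $w_1$ or $w_m$. For a vertex $v$, $N(v)=\{q\in\mathcal P: v\in q\}$; $M(\mathcal P)$ is the transversal matroid on ground set $\mathcal P$ whose independent sets are the partial transversals of $(N(v))_{v\in V(G)}$. For a transversal matroid $M$ with presentation $\mathcal A=(A_1,\ldots,A_r)$ and $e\in E(M)$, a graph $H$ is $(e,\mathcal A)$-presenting if there is a bijection $\phi:V(H)\to\{i: e\in A_i\}$ such that for all distinct $x,y\in V(H)$ the subgraph induced by $\{z\in V(H): A_{\phi(z)}\subseteq\mathrm{cl}^*_M(A_{\phi(x)}\cup A_{\phi(y)})\}$ is connected ($\mathrm{cl}^*_M$ the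 closure in $M^*$); it is minimal if deleting any one edge gives a graph that is not $(e,\mathcal A)$-presenting. *)

theory Defs
  imports Main
begin

definition simple_graph :: "'a set \<Rightarrow> ('a \<Rightarrow> 'a \<Rightarrow> bool) \<Rightarrow> bool" where
  "simple_graph V Eg \<longleftrightarrow> finite V \<and>
     (\<forall>u v. Eg u v \<longrightarrow> u \<in> V \<and> v \<in> V \<and> u \<noteq> v \<and> Eg v u)"

definition degree :: "'a set \<Rightarrow> ('a \<Rightarrow> 'a \<Rightarrow> bool) \<Rightarrow> 'a \<Rightarrow> nat" where
  "degree V Eg v = card {u \<in> V. Eg v u}"

definition is_path :: "'a set \<Rightarrow> ('a \<Rightarrow> 'a \<Rightarrow> bool) \<Rightarrow> 'a list \<Rightarrow> bool" where
  "is_path V Eg ps \<longleftrightarrow> ps \<noteq> [] \<and> distinct ps \<and> set ps \<subseteq> V \<and>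
     (\<forall>i. Suc i < length ps \<longrightarrow> Eg (ps ! i) (ps ! Suc i))"

text \<open>A collection of (not necessarily distinct) paths is an indexed family
  P :: 'i => 'a list over a finite index set Q; the indices are the elements of the collection.\<close>
definition path_circular :: "'a set \<Rightarrow> ('a \<Rightarrow> 'a \<Rightarrow> bool) \<Rightarrow> 'i set \<Rightarrow> ('i \<Rightarrow> 'a list) \<Rightarrow> bool" where
  "path_circular V Eg Q P \<longleftrightarrow>
     (\<forall>q\<in>Q. is_path V Eg (P q)) \<and>
     (\<forall>q\<in>Q. \<forall>i. 0 < i \<and> Suc i < length (P q) \<longrightarrow>
        degree V Eg (P q ! i) = 2 \<and>
        (\<forall>q'\<in>Q. P q ! i \<in> set (P q') \<longrightarrow>
            hd (P q) \<in> set (P q') \<or> last (P q) \<in> set (P q')))"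

definition Nbhd :: "'i set \<Rightarrow> ('i \<Rightarrow> 'a list) \<Rightarrow> 'a \<Rightarrow> 'i set" where
  "Nbhd Q P v = {q \<in> Q. v \<in> set (P q)}"

definition tr_indep :: "'e set \<Rightarrow> 'j set \<Rightarrow> ('j \<Rightarrow> 'e set) \<Rightarrow> 'e set \<Rightarrow> bool" where
  "tr_indep E J A X \<longleftrightarrow> X \<subseteq> E \<and>
     (\<exists>f. inj_on f X \<and> f ` X \<subseteq> J \<and> (\<forall>x\<in>X. x \<in> A (f x)))"

definition is_basis :: "('e set \<Rightarrow> bool) \<Rightarrow> 'e set \<Rightarrow> bool" where
  "is_basis indep B \<longleftrightarrow> indep B \<and> (\<forall>X. indep X \<and> B \<subseteq> X \<longrightarrow> X = B)"

definition dual_indep :: "('e set \<Rightarrow> bool) \<Rightarrow> 'e set \<Rightarrow> 'e set \<Rightarrow> bool" where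
  "dual_indep indep E X \<longleftrightarrow> X \<subseteq> E \<and> (\<exists>B. is_basis indep B \<and> B \<subseteq> E - X)"

definition mrank :: "('e set \<Rightarrow> bool) \<Rightarrow> 'e set \<Rightarrow> nat" where
  "mrank indep X = Max {card Y | Y. Y \<subseteq> X \<and> indep Y}"

definition mclosure :: "('e set \<Rightarrow> bool) \<Rightarrow> 'e set \<Rightarrow> 'e set \<Rightarrow> 'e set" where
  "mclosure indep E X = {e \<in> E. mrank indep (X \<union> {e}) = mrank indep X}"

definition tr_coclosure :: "'e set \<Rightarrow> 'j set \<Rightarrow> ('j \<Rightarrow> 'e set) \<Rightarrow> 'e set \<Rightarrow> 'e set" where
  "tr_coclosure E J A X = mclosure (dual_indep (tr_indep E J A) E) E X"

definition induced_connected :: "'v set set \<Rightarrow> 'v set \<Rightarrow> bool" where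
  "induced_connected EH S \<longleftrightarrow>
     (\<forall>a\<in>S. \<forall>b\<in>S. (a, b) \<in> {(x, y). x \<in> S \<and> y \<in> S \<and> {x, y} \<in> EH}\<^sup>*)"

definition presenting ::
  "'e set \<Rightarrow> 'j set \<Rightarrow> ('j \<Rightarrow> 'e set) \<Rightarrow> 'e \<Rightarrow> 'v set \<Rightarrow> 'v set set \<Rightarrow> ('v \<Rightarrow> 'j) \<Rightarrow> bool" where
  "presenting E J A e VH EH \<phi> \<longleftrightarrow>
     bij_betw \<phi> VH {j \<in> J. e \<in> A j} \<and>
     (\<forall>x\<in>VH. \<forall>y\<in>VH. x \<noteq> y \<longrightarrow>
        induced_connected EH
          {z \<in> VH. A (\<phi> z) \<subseteq> tr_coclosure E J A (A (\<phi> x) \<union> A (\<phi> y))})"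

definition minimal_presenting ::
  "'e set \<Rightarrow> 'j set \<Rightarrow> ('j \<Rightarrow> 'e set) \<Rightarrow> 'e \<Rightarrow> 'v set \<Rightarrow> 'v set set \<Rightarrow> ('v \<Rightarrow> 'j) \<Rightarrow> bool" where
  "minimal_presenting E J A e VH EH \<phi> \<longleftrightarrow>
     presenting E J A e VH EH \<phi> \<and>
     (\<forall>ed\<in>EH. \<not> presenting E J A e VH (EH - {ed}) \<phi>)"

end

theory Submission
  imports Defs
begin

lemma cross_lemma:
  assumes "i < length xs" "j < length xs" "xs ! i \<in> T" "xs ! j \<notin> T"
  shows "\<exists>l. Suc l < length xs \<and> (xs ! l \<in> T) \<noteq> (xs ! Suc l \<in> T)"
proof (rule ccontr)
  assume H: "\<not> ?thesis"
  have "\<forall>n. n < length xs \<longrightarrow> (xs ! n \<in> T) = (xs ! 0 \<in> T)"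
  proof
    fix n show "n < length xs \<longrightarrow> (xs ! n \<in> T) = (xs ! 0 \<in> T)"
      using H by (induction n) auto
  qed
  then show False using assms by metis
qed

lemma deg2_lemma:
  assumes sg: "simple_graph V Eg" and d: "degree V Eg u = 2"
    and "Eg u x" "Eg u y" "x \<noteq> y" "Eg u v"
  shows "v = x \<or> v = y"
proof -
  let ?N = "{z \<in> V. Eg u z}"
  have fin: "finite ?N" using sg unfolding simple_graph_def by auto
  have sub: "{x, y} \<subseteq> ?N" using assms sg unfolding simple_graph_def by auto
  have "card {x, y} = card ?N" using d assms(5) unfolding degree_def by simp
  then have "{x, y} = ?N" using card_subset_eq[OF fin sub] by simp
  moreover have "v \<in> ?N" using assms sg unfolding simple_graph_def by auto
  ultimately show ?thesis by blast
qed

lemma key_lemma: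
  assumes sg: "simple_graph V Eg" and pc: "path_circular V Eg Q P"
    and pQ: "p \<in> Q" and qQ: "q \<in> Q"
    and ac: "a < c" and cb: "c < b" and bk: "b < length (P p)"
    and cq: "P p ! c \<in> set (P q)"
  shows "P p ! a \<in> set (P q) \<or> P p ! b \<in> set (P q)"
proof (rule ccontr)
  assume nq: "\<not> ?thesis"
  define ps where "ps = P p"
  define qs where "qs = P q"
  define T where "T = {ps ! m | m. a < m \<and> m < b}"
  have pp: "is_path V Eg ps" using pc pQ unfolding path_circular_def ps_def by auto
  have qp: "is_path V Eg qs" using pc qQ unfolding path_circular_def qs_def by auto
  have dps: "distinct ps" using pp unfolding is_path_def by auto
  have psV: "set ps \<subseteq> V" using pp unfolding is_path_def by auto
  have qsV: "set qs \<subseteq> V" using qp unfolding is_path_def by auto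
  have adj: "\<And>i. Suc i < length ps \<Longrightarrow> Eg (ps ! i) (ps ! Suc i)" using pp unfolding is_path_def by auto
  have adjq: "\<And>i. Suc i < length qs \<Longrightarrow> Eg (qs ! i) (qs ! Suc i)" using qp unfolding is_path_def by auto
  have sym: "\<And>x y. Eg x y \<Longrightarrow> Eg y x" using sg unfolding simple_graph_def by auto
  have inT: "\<And>m. m < length ps \<Longrightarrow> ps ! m \<in> T \<longleftrightarrow> a < m \<and> m < b"
  proof -
    fix m assume m: "m < length ps"
    show "ps ! m \<in> T \<longleftrightarrow> a < m \<and> m < b"
    proof
      assume "ps ! m \<in> T"
      then obtain m' where "ps ! m = ps ! m'" "a < m'" "m' < b" unfolding T_def by auto
      moreover have "m' < length ps" using \<open>m' < b\<close> bk ps_def by simp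
      ultimately show "a < m \<and> m < b" using dps m nth_eq_iff_index_eq by metis
    qed (auto simp: T_def)
  qed
  have c_int: "0 < c \<and> Suc c < length ps" using ac cb bk ps_def by simp
  have pc2: "\<forall>q\<in>Q. \<forall>i. 0 < i \<and> Suc i < length (P q) \<longrightarrow>
        (\<forall>q'\<in>Q. P q ! i \<in> set (P q') \<longrightarrow>
            hd (P q) \<in> set (P q') \<or> last (P q) \<in> set (P q'))"
    using pc unfolding path_circular_def by blast
  have ends: "hd ps \<in> set qs \<or> last ps \<in> set qs"
    using pc2 pQ qQ cq c_int unfolding ps_def qs_def by blast
  have ne: "ps \<noteq> []" using bk ps_def by auto
  have "\<exists>v\<in>set qs. v \<notin> T"
  proof -
    have "hd ps \<notin> T" using inT[of 0] ne hd_conv_nth[OF ne] by auto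
    moreover have "last ps \<notin> T" using inT[of "length ps - 1"] ne last_conv_nth[OF ne] bk ps_def by auto
    ultimately show ?thesis using ends by blast
  qed
  then obtain j where j: "j < length qs" "qs ! j \<notin> T" by (metis in_set_conv_nth)
  obtain i where i: "i < length qs" "qs ! i = ps ! c" using cq unfolding qs_def ps_def by (metis in_set_conv_nth)
  have "ps ! c \<in> T" using inT[of c] ac cb bk ps_def by simp
  then obtain l where l: "Suc l < length qs" "(qs ! l \<in> T) \<noteq> (qs ! Suc l \<in> T)"
    using cross_lemma[OF i(1) j(1)] i j by auto
  have lm1: "qs ! l \<in> set qs" "qs ! Suc l \<in> set qs" using l(1) by simp_all
  have ee: "Eg (qs ! l) (qs ! Suc l)" "Eg (qs ! Suc l) (qs ! l)" using adjq[OF l(1)] sym by auto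
  obtain u v where uv: "u \<in> T" "v \<notin> T" "Eg u v" "v \<in> set qs"
  proof (cases "qs ! l \<in> T")
    case True
    then show ?thesis using that[of "qs ! l" "qs ! Suc l"] l(2) ee lm1 by blast
  next
    case False
    then show ?thesis using that[of "qs ! Suc l" "qs ! l"] l(2) ee lm1 by blast
  qed
  obtain m where m: "u = ps ! m" "a < m" "m < b" using uv(1) unfolding T_def by auto
  have mk: "Suc m < length ps" using m bk ps_def by simp
  have m0: "0 < m" using m by simp
  have deg: "degree V Eg (ps ! m) = 2" using pc pQ m0 mk unfolding path_circular_def ps_def by auto
  have e1: "Eg (ps ! m) (ps ! Suc m)" using adj[OF mk] .
  have e2: "Eg (ps ! m) (ps ! (m - 1))" using adj[of "m - 1"] m0 mk sym by simp
  have neq: "ps ! Suc m \<noteq> ps ! (m - 1)" using dps mk nth_eq_iff_index_eq by fastforce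
  have "v = ps ! Suc m \<or> v = ps ! (m - 1)" using deg2_lemma[OF sg deg e1 e2 neq] uv(3) m(1) by simp
  then show False
  proof
    assume v: "v = ps ! Suc m"
    then have "\<not> Suc m < b" using uv(2) inT[OF mk] m by simp
    then have "Suc m = b" using m by simp
    then show False using v uv(4) nq unfolding ps_def qs_def by simp
  next
    assume v: "v = ps ! (m - 1)"
    then have "\<not> a < m - 1" proof (intro notI)
      assume "a < m - 1"
      moreover have "m - 1 < length ps" "m - 1 < b" using m mk by auto
      ultimately have "ps ! (m - 1) \<in> T" using inT[of "m - 1"] by blast
      then show False using v uv(2) by simp
    qed
    then have "m - 1 = a" using m by simp
    then show False using v uv(4) nq unfolding ps_def qs_def by simp
  qed
qed

lemma path_conn:
  assumes S: "S \<subseteq> set ps"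
    and iv: "\<And>a b c. a < c \<Longrightarrow> c < b \<Longrightarrow> b < length ps \<Longrightarrow> ps ! a \<in> S \<Longrightarrow> ps ! b \<in> S \<Longrightarrow> ps ! c \<in> S"
  shows "induced_connected {{ps ! i, ps ! Suc i} | i. Suc i < length ps} S"
proof -
  define EH where "EH = {{ps ! i, ps ! Suc i} | i. Suc i < length ps}"
  define R where "R = {(x, y). x \<in> S \<and> y \<in> S \<and> {x, y} \<in> EH}"
  have step: "\<And>n. i + n < length ps \<Longrightarrow> ps ! i \<in> S \<Longrightarrow> ps ! (i + n) \<in> S \<Longrightarrow>
     (ps ! i, ps ! (i + n)) \<in> R\<^sup>* \<and> (ps ! (i + n), ps ! i) \<in> R\<^sup>*" for i
  proof -
    fix n show "i + n < length ps \<Longrightarrow> ps ! i \<in> S \<Longrightarrow> ps ! (i + n) \<in> S \<Longrightarrow>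
     (ps ! i, ps ! (i + n)) \<in> R\<^sup>* \<and> (ps ! (i + n), ps ! i) \<in> R\<^sup>*"
    proof (induction n)
      case 0
      then show ?case by simp
    next
      case (Suc n)
      have mid: "ps ! (i + n) \<in> S"
      proof (cases n)
        case 0
        then show ?thesis using Suc by simp
      next
        case (Suc n')
        then show ?thesis using iv[of i "i + n" "i + Suc n"] Suc.prems by simp
      qed
      have IH: "(ps ! i, ps ! (i + n)) \<in> R\<^sup>*" "(ps ! (i + n), ps ! i) \<in> R\<^sup>*"
        using Suc mid by auto
      have e: "{ps ! (i + n), ps ! Suc (i + n)} \<in> EH" unfolding EH_def using Suc.prems(1) by auto
      have r1: "(ps ! (i + n), ps ! (i + Suc n)) \<in> R" unfolding R_def using e mid Suc.prems by simp
      have r2: "(ps ! (i + Suc n), ps ! (i + n)) \<in> R" unfolding R_def using e mid Suc.prems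
        by (simp add: insert_commute)
      show ?case using IH r1 r2
        by (meson rtrancl_into_rtrancl converse_rtrancl_into_rtrancl)
    qed
  qed
  show ?thesis unfolding induced_connected_def EH_def[symmetric] R_def[symmetric]
  proof (intro ballI)
    fix u v assume u: "u \<in> S" and v: "v \<in> S"
    obtain i where i: "i < length ps" "u = ps ! i" using u S by (metis in_set_conv_nth subsetD)
    obtain j where j: "j < length ps" "v = ps ! j" using v S by (metis in_set_conv_nth subsetD)
    show "(u, v) \<in> R\<^sup>*"
    proof (cases "i \<le> j")
      case True
      then show ?thesis using step[of i "j - i"] i j u v by simp
    next
      case False
      then show ?thesis using step[of j "i - j"] i j u v by simp
    qed
  qed
qed

lemma no_path:
  assumes d: "distinct ps" and il: "Suc i < length ps"
    and r: "(ps ! i, ps ! Suc i) \<in> {(x, y). x \<in> S \<and> y \<in> S \<and>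
       {x, y} \<in> {{ps ! i, ps ! Suc i} | i. Suc i < length ps} - {{ps ! i, ps ! Suc i}}}\<^sup>*"
  shows False
proof -
  let ?R = "{(x, y). x \<in> S \<and> y \<in> S \<and>
       {x, y} \<in> {{ps ! i, ps ! Suc i} | i. Suc i < length ps} - {{ps ! i, ps ! Suc i}}}"
  have "\<exists>m\<le>i. z = ps ! m" if "(ps ! i, z) \<in> ?R\<^sup>*" for z
    using that
  proof (induction rule: rtrancl_induct)
    case base
    then show ?case by auto
  next
    case (step y z)
    then obtain m where m: "m \<le> i" "y = ps ! m" by auto
    from step(2) obtain j where j: "Suc j < length ps" "{y, z} = {ps ! j, ps ! Suc j}"
      "{y, z} \<noteq> {ps ! i, ps ! Suc i}" by auto
    have mk: "m < length ps" using m il by simp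
    from j(2) have "(y = ps ! j \<and> z = ps ! Suc j) \<or> (y = ps ! Suc j \<and> z = ps ! j)"
      by (simp add: doubleton_eq_iff)
    then show ?case
    proof
      assume a: "y = ps ! j \<and> z = ps ! Suc j"
      then have "m = j" using m mk j(1) d nth_eq_iff_index_eq by fastforce
      then have "j \<noteq> i" using a j(3) m by auto
      then show ?thesis using a \<open>m = j\<close> m by (intro exI[of _ "Suc j"]) auto
    next
      assume a: "y = ps ! Suc j \<and> z = ps ! j"
      then have "m = Suc j" using m mk j(1) d nth_eq_iff_index_eq by fastforce
      then show ?thesis using a m by (intro exI[of _ j]) auto
    qed
  qed
  then obtain m where "m \<le> i" "ps ! Suc i = ps ! m" using r by blast
  then show False using d il nth_eq_iff_index_eq by fastforce
qed


lemma coclosure_ext: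
  assumes "X \<subseteq> E"
  shows "X \<subseteq> tr_coclosure E J A X"
  using assms unfolding tr_coclosure_def mclosure_def by (auto simp: insert_absorb)

theorem lemma4p2:
  fixes V :: "'a set" and Eg :: "'a \<Rightarrow> 'a \<Rightarrow> bool"
    and Q :: "'i set" and P :: "'i \<Rightarrow> 'a list" and p :: 'i and w :: "nat \<Rightarrow> 'a"
  assumes "simple_graph V Eg"
    and "finite Q"
    and "path_circular V Eg Q P"
    and "p \<in> Q"
    and "bij_betw w {..<card V} V"
    and "\<forall>i<length (P p). w i = P p ! i"
  shows "minimal_presenting Q {..<card V} (\<lambda>i. Nbhd Q P (w i)) p
           (set (P p)) {{P p ! i, P p ! Suc i} | i. Suc i < length (P p)}
           (\<lambda>u. THE i. i < length (P p) \<and> P p ! i = u)"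
proof -
  note sg = assms(1) and pc = assms(3) and pQ = assms(4) and bw = assms(5) and wps = assms(6)
  define ps where "ps = P p"
  define k where "k = length ps"
  define A where "A = (\<lambda>i. Nbhd Q P (w i))"
  define \<phi> where "\<phi> = (\<lambda>u. THE i. i < length (P p) \<and> P p ! i = u)"
  define EH where "EH = {{P p ! i, P p ! Suc i} | i. Suc i < length (P p)}"
  have pp: "is_path V Eg ps" using pc pQ unfolding path_circular_def ps_def by auto
  have dps: "distinct ps" using pp unfolding is_path_def by auto
  have psV: "set ps \<subseteq> V" using pp unfolding is_path_def by auto
  have finV: "finite V" using sg unfolding simple_graph_def by auto
  have kV: "k \<le> card V" using card_mono[OF finV psV] distinct_card[OF dps] k_def by simp
  have wi: "\<And>i. i < k \<Longrightarrow> w i = ps ! i" using wps k_def ps_def by simp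
  have phi_nth: "\<And>i. i < k \<Longrightarrow> \<phi> (ps ! i) = i"
    unfolding \<phi>_def ps_def[symmetric] k_def[symmetric]
    using dps k_def nth_eq_iff_index_eq by (intro the_equality) auto
  have Aphi: "\<And>z. z \<in> set ps \<Longrightarrow> A (\<phi> z) = Nbhd Q P z"
  proof -
    fix z assume "z \<in> set ps"
    then obtain i where "i < k" "z = ps ! i" using k_def by (metis in_set_conv_nth)
    then show "A (\<phi> z) = Nbhd Q P z" using phi_nth wi A_def by simp
  qed
  have Jset: "{j \<in> {..<card V}. p \<in> A j} = {..<k}"
  proof (intro set_eqI iffI)
    fix j assume "j \<in> {j \<in> {..<card V}. p \<in> A j}"
    then have j: "j < card V" "w j \<in> set ps" unfolding A_def Nbhd_def ps_def by auto
    then obtain i where i: "i < k" "w j = ps ! i" using k_def by (metis in_set_conv_nth)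
    have "w j = w i" using i wi by simp
    moreover have "i < card V" using i kV by simp
    ultimately have "j = i" using bw j unfolding bij_betw_def inj_on_def by auto
    then show "j \<in> {..<k}" using i by simp
  next
    fix j assume "j \<in> {..<k}"
    then show "j \<in> {j \<in> {..<card V}. p \<in> A j}"
      using kV wi pQ unfolding A_def Nbhd_def ps_def k_def by auto
  qed
  have bij: "bij_betw \<phi> (set ps) {..<k}"
  proof (rule bij_betw_byWitness[where f' = "\<lambda>i. ps ! i"])
    show "\<forall>a\<in>set ps. ps ! \<phi> a = a" using phi_nth k_def by (metis in_set_conv_nth)
    show "\<forall>a'\<in>{..<k}. \<phi> (ps ! a') = a'" using phi_nth by simp
    show "\<phi> ` set ps \<subseteq> {..<k}" using phi_nth k_def by (auto simp: in_set_conv_nth)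
    show "(\<lambda>i. ps ! i) ` {..<k} \<subseteq> set ps" using k_def by auto
  qed
  have NQ: "\<And>z. Nbhd Q P z \<subseteq> Q" unfolding Nbhd_def by auto
  have pres_conn: "induced_connected EH
          {z \<in> set ps. A (\<phi> z) \<subseteq> tr_coclosure Q {..<card V} A (A (\<phi> x) \<union> A (\<phi> y))}"
    if x: "x \<in> set ps" and y: "y \<in> set ps" for x y
  proof -
    define C where "C = tr_coclosure Q {..<card V} A (A (\<phi> x) \<union> A (\<phi> y))"
    define S where "S = {z \<in> set ps. A (\<phi> z) \<subseteq> C}"
    have "induced_connected {{ps ! i, ps ! Suc i} | i. Suc i < length ps} S"
    proof (rule path_conn)
      show "S \<subseteq> set ps" unfolding S_def by auto
      fix a b c assume abc: "a < c" "c < b" "b < length ps" "ps ! a \<in> S" "ps ! b \<in> S"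
      have cs: "ps ! c \<in> set ps" using abc by simp
      have "Nbhd Q P (ps ! c) \<subseteq> Nbhd Q P (ps ! a) \<union> Nbhd Q P (ps ! b)"
      proof
        fix q assume "q \<in> Nbhd Q P (ps ! c)"
        then have "q \<in> Q" "ps ! c \<in> set (P q)" unfolding Nbhd_def by auto
        then have "ps ! a \<in> set (P q) \<or> ps ! b \<in> set (P q)"
          using key_lemma[OF sg pc pQ _ abc(1,2)] abc(3) unfolding ps_def by blast
        then show "q \<in> Nbhd Q P (ps ! a) \<union> Nbhd Q P (ps ! b)" using \<open>q \<in> Q\<close> unfolding Nbhd_def by auto
      qed
      moreover have "Nbhd Q P (ps ! a) \<subseteq> C" "Nbhd Q P (ps ! b) \<subseteq> C"
        using abc Aphi unfolding S_def by auto
      ultimately show "ps ! c \<in> S" unfolding S_def using cs Aphi by auto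
    qed
    then show ?thesis unfolding S_def C_def EH_def ps_def by simp
  qed
  have presenting: "presenting Q {..<card V} A p (set ps) EH \<phi>"
    unfolding presenting_def using bij Jset pres_conn by simp
  have minimal: "\<not> presenting Q {..<card V} A p (set ps) (EH - {ed}) \<phi>" if ed: "ed \<in> EH" for ed
  proof
    assume pr: "presenting Q {..<card V} A p (set ps) (EH - {ed}) \<phi>"
    obtain i where i: "Suc i < length ps" "ed = {ps ! i, ps ! Suc i}" using ed unfolding EH_def ps_def by auto
    define x where "x = ps ! i"
    define y where "y = ps ! Suc i"
    have xy: "x \<in> set ps" "y \<in> set ps" "x \<noteq> y" using i dps nth_eq_iff_index_eq
      unfolding x_def y_def by fastforce+
    define S where "S = {z \<in> set ps. A (\<phi> z) \<subseteq> tr_coclosure Q {..<card V} A (A (\<phi> x) \<union> A (\<phi> y))}"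
    have inS: "x \<in> S" "y \<in> S" unfolding S_def using xy Aphi NQ
      by (auto intro!: subsetD[OF coclosure_ext])
    have "induced_connected (EH - {ed}) S" using pr xy unfolding presenting_def S_def by blast
    then have "(x, y) \<in> {(a, b). a \<in> S \<and> b \<in> S \<and> {a, b} \<in> EH - {ed}}\<^sup>*"
      using inS unfolding induced_connected_def by blast
    then show False using no_path[OF dps i(1)] i(2) unfolding x_def y_def EH_def ps_def by blast
  qed
  show ?thesis unfolding minimal_presenting_def
    using presenting minimal unfolding A_def \<phi>_def EH_def ps_def by blast
qed

end
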